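(* Let $(a_n)$ be a strictly decreasing sequence of positive reals with $a_n\to0$ and $(b_n)$ positive reals such that $\phi_{ij}:=\frac{b_i/b_j}{1+a_i/a_j}\le C\mu^{|i-j|}$ for all $i,j\in\mathbb{N}$ and some $C>0$, $\mu\in(0,1)$. Then $(a_n/b_n)\in\ell^1$; more precisely, $\sum_{j}a_j/b_j\le\kappa\,(a_1+a_i)/b_i$ for every $i\in\mathbb{N}$, where $\kappa:=C\frac{1+\mu}{1-\mu}$. *)

theory Defs
  imports Complex_Main
begin

end

theory Submission
  imports Defs
begin

theorem mainTheorem16:
  fixes a b :: "nat \<Rightarrow> real" and C \<mu> :: real
  assumes a_pos: "\<And>n. a n > 0"
    and a_decr: "\<And>m n. m < n \<Longrightarrow> a n < a m"
    and a_lim: "a \<longlonglongrightarrow> 0"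
    and b_pos: "\<And>n. b n > 0"
    and C_pos: "C > 0"
    and mu: "0 < \<mu>" "\<mu> < 1"
    and phi: "\<And>i j. (b i / b j) / (1 + a i / a j) \<le> C * \<mu> ^ (if i \<le> j then j - i else i - j)"
  shows "summable (\<lambda>n. a n / b n) \<and>
         (\<forall>i. (\<Sum>j. a j / b j) \<le> (C * (1 + \<mu>) / (1 - \<mu>)) * (a 0 + a i) / b i)"
proof -
  have a0: "a j \<le> a 0" for j
    using a_decr[of 0 j] by (cases j) auto
  define g where "g i j = \<mu> ^ (if i \<le> j then j - i else i - j)" for i j :: nat
  define g1 where "g1 i j = (if i \<le> j then \<mu> ^ (j - i) else 0)" for i j :: nat
  define g2 where "g2 i j = (if j < i then \<mu> ^ (i - j) else 0)" for i j :: nat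
  have gsplit: "g i = (\<lambda>j. g1 i j + g2 i j)" for i
    by (auto simp: g_def g1_def g2_def)
  have s1: "summable (g1 i)" and e1: "suminf (g1 i) = 1 / (1 - \<mu>)" for i
  proof -
    have sh: "(\<lambda>n. g1 i (n + i)) = (\<lambda>n. \<mu> ^ n)" by (auto simp: g1_def)
    have sg: "summable (\<lambda>n. \<mu> ^ n)" using mu by (intro summable_geometric) auto
    show "summable (g1 i)" using summable_iff_shift[of "g1 i" i] sh sg by simp
    then have "suminf (g1 i) = (\<Sum>n. g1 i (n + i)) + sum (g1 i) {..<i}"
      by (rule suminf_split_initial_segment)
    also have "sum (g1 i) {..<i} = 0" by (auto simp: g1_def)
    also have "(\<Sum>n. g1 i (n + i)) = 1 / (1 - \<mu>)" using sh mu
      by (simp add: suminf_geometric)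
    finally show "suminf (g1 i) = 1 / (1 - \<mu>)" by simp
  qed
  have s2: "summable (g2 i)" and e2: "suminf (g2 i) \<le> \<mu> / (1 - \<mu>)" for i
  proof -
    have z: "\<And>n. n \<notin> {..<i} \<Longrightarrow> g2 i n = 0" by (auto simp: g2_def)
    show "summable (g2 i)" using z by (intro summable_finite[of "{..<i}"]) auto
    have "suminf (g2 i) = sum (g2 i) {..<i}" using z by (intro suminf_finite) auto
    also have "\<dots> = (\<Sum>j<i. \<mu> ^ (i - j))" by (auto simp: g2_def)
    also have "\<dots> = (\<Sum>j<i. \<mu> ^ Suc (i - Suc j))"
      by (intro sum.cong) (auto simp: Suc_diff_Suc)
    also have "\<dots> = (\<Sum>k<i. \<mu> ^ Suc k)"
      using sum.nat_diff_reindex[of "\<lambda>k. \<mu> ^ Suc k" i] by simp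
    also have "\<dots> = \<mu> * (\<Sum>k<i. \<mu> ^ k)" by (simp add: sum_distrib_left)
    also have "(\<Sum>k<i. \<mu> ^ k) = (1 - \<mu> ^ i) / (1 - \<mu>)" using mu
      by (simp add: sum_gp_strict)
    also have "\<mu> * ((1 - \<mu> ^ i) / (1 - \<mu>)) \<le> \<mu> / (1 - \<mu>)"
    proof -
      have "\<mu> * (1 - \<mu> ^ i) \<le> \<mu>" using mu by (simp add: mult_le_cancel_left1)
      then have "\<mu> * (1 - \<mu> ^ i) / (1 - \<mu>) \<le> \<mu> / (1 - \<mu>)"
        using mu by (intro divide_right_mono) auto
      then show ?thesis by simp
    qed
    finally show "suminf (g2 i) \<le> \<mu> / (1 - \<mu>)" .
  qed
  have sg: "summable (g i)" and eg: "suminf (g i) \<le> (1 + \<mu>) / (1 - \<mu>)" for i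
  proof -
    show "summable (g i)" unfolding gsplit using s1 s2 by (rule summable_add)
    have "suminf (g i) = suminf (g1 i) + suminf (g2 i)"
      unfolding gsplit using s1 s2 by (rule suminf_add[symmetric])
    also have "\<dots> \<le> 1 / (1 - \<mu>) + \<mu> / (1 - \<mu>)" using e1 e2 by simp
    also have "\<dots> = (1 + \<mu>) / (1 - \<mu>)" by (simp add: add_divide_distrib)
    finally show "suminf (g i) \<le> (1 + \<mu>) / (1 - \<mu>)" .
  qed
  define K where "K i = C * (a 0 + a i) / b i" for i
  have K0: "K i \<ge> 0" for i unfolding K_def using C_pos a_pos[of 0] a_pos[of i] b_pos[of i] by simp
  have tm: "a j / b j \<le> K i * g i j" for i j
  proof -
    have eq: "a j / b j = ((b i / b j) / (1 + a i / a j)) * ((a j + a i) / b i)"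
    proof -
      have p: "a j + a i > 0" "b i > 0" "b j > 0" "a j > 0" using a_pos[of i] a_pos[of j] b_pos[of i] b_pos[of j] by auto
      have "(b i / b j) / (1 + a i / a j) = b i * a j / (b j * (a j + a i))"
        using p by (simp add: field_simps)
      moreover have "b i * a j / (b j * (a j + a i)) * ((a j + a i) / b i)
          = ((b i * (a j + a i)) * a j) / ((b i * (a j + a i)) * b j)"
        by (simp add: ac_simps)
      moreover have "((b i * (a j + a i)) * a j) / ((b i * (a j + a i)) * b j) = a j / b j"
        using p by (intro nonzero_mult_divide_mult_cancel_left) auto
      ultimately show ?thesis by simp
    qed
    have "\<dots> \<le> (C * g i j) * ((a j + a i) / b i)"
      using phi[of i j] a_pos[of i] a_pos[of j] b_pos[of i]
      by (intro mult_right_mono) (auto simp: g_def)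
    also have "\<dots> \<le> (C * g i j) * ((a 0 + a i) / b i)"
      using a0[of j] b_pos[of i] C_pos mu
      by (intro mult_left_mono divide_right_mono) (auto simp: g_def)
    also have "\<dots> = K i * g i j" by (simp add: K_def)
    finally show ?thesis using eq by simp
  qed
  have nn: "0 \<le> a j / b j" for j using a_pos[of j] b_pos[of j] by simp
  have sK: "summable (\<lambda>j. K i * g i j)" for i using sg by (rule summable_mult)
  have S: "summable (\<lambda>n. a n / b n)"
  proof (rule summable_comparison_test)
    show "summable (\<lambda>j. K 0 * g 0 j)" by (rule sK)
    have "norm (a n / b n) \<le> K 0 * g 0 n" for n
      using tm[of n 0] nn[of n] by (simp only: real_norm_def abs_of_nonneg)
    then show "\<exists>N. \<forall>n\<ge>N. norm (a n / b n) \<le> K 0 * g 0 n" by blast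
  qed
  moreover have "(\<Sum>j. a j / b j) \<le> (C * (1 + \<mu>) / (1 - \<mu>)) * (a 0 + a i) / b i" for i
  proof -
    have "(\<Sum>j. a j / b j) \<le> (\<Sum>j. K i * g i j)"
      using S sK tm by (intro suminf_le) auto
    also have "\<dots> = K i * suminf (g i)" using suminf_mult[OF sg[of i], of "K i"] by simp
    also have "\<dots> \<le> K i * ((1 + \<mu>) / (1 - \<mu>))" using eg K0 by (intro mult_left_mono) auto
    also have "\<dots> = (C * (1 + \<mu>) / (1 - \<mu>)) * (a 0 + a i) / b i" by (simp add: K_def ac_simps)
    finally show ?thesis .
  qed
  ultimately show ?thesis by blast
qed

end
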